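(* Let $N\ge 2$, let $f,g,\lambda,\Omega,u$ be as follows: $f:[0,+\infty)^2\to\mathbb{R}$ bounded measurable, $v\mapsto f(r,v)$ continuous uniformly in $r$, $r\mapsto f(r,v)$ nonincreasing; $g\in C([0,+\infty))\cap C^1((0,+\infty))$, $g(0)=0$, $g'>0$ on $(0,+\infty)$; $\lambda\in C([0,+\infty))$ positive and nondecreasing; $\Omega\subset\mathbb{R}^N$ a bounded domain; $u\in C^1(\Omega)\cap C(\overline\Omega)$ a weak solution of $-\nabla\cdot(g(|\nabla u|)\nabla u/|\nabla u|)=f(|x|,u)$, $u>0$ in $\Omega$, $u=0$ on $\partial\Omega$, such that for every $\varepsilon>0$ there is an open $U\supset\partial\Omega$ with $||\nabla u(x)|-\lambda(|x|)|<\varepsilon$ on $U\cap\Omega$. Extend $u$ by zero outside $\Omega$, let $L$ be its Lipschitz constant on $\mathbb{R}^N$, fix $R>0$ with $\overline\Omega\subset B_R$, and set $k:=2RL$. Let $u^t$ ($0\le t\le+\infty$) denote the continuous Steiner symmetrization of $u$ with respect to $x_1$. If $t\in[0,+\infty)$ and $x\in\mathbb{R}^N$ satisfy $u^t(x)>kt$, then $x\in\Omega$.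
   Context: Weak solution: $\int_\Omega g(|\nabla u|)\frac{\nabla u\cdot\nabla v}{|\nabla u|}dx=\int_\Omega f(|x|,u)v\,dx$ for all $v\in W_0^{1,1}(\Omega)\cap W^{1,\infty}(\Omega)$ (with $g(|y|)y/|y|:=0$ for $y=0$). The zero extension of $u$ is Lipschitz continuous on $\mathbb{R}^N$ (as asserted in the paper). Continuous Steiner symmetrization (CStS): on the family $\mathscr{M}(\mathbb{R})$ of measurable subsets of $\mathbb{R}$ of finite measure there is a unique family of maps $E_t:\mathscr{M}(\mathbb{R})\to\mathscr{M}(\mathbb{R})$, $0\le t\le+\infty$, such that (i) $\mathscr{L}^1(E_t(M))=\mathscr{L}^1(M)$; (ii) $M\subset N$ implies $E_t(M)\subset E_t(N)$; (iii) $E_t(E_s(M))=E_{s+t}(M)$; (iv) $E_t([x-R,x+R])=[xe^{-t}-R,xe^{-t}+R]$. For $M\subset\mathbb{R}^N$ measurable of finite measure, writing $x=(x_1,x')$ and $M(x')=\{x_1:(x_1,x')\in M\}$, set $E_t(M)=\{(x_1,x'):x_1\in E_t(M(x'))\}$. For a nonnegative measurable $u$ with $\mathscr{L}^N(\{u>c\})<\infty$ for all $c>0$, define $u^t(x)=\sup\{c>0:x\in E_t(\{u>c\})\}$ if $x\in\bigcup_{c>0}E_t(\{u>c\})$ and $u^t(x)=0$ otherwise. For continuous $u$, $u^t$ denotes its unique continuous representative (obtained by using the open precise representatives of the sets $E_t(\{u>c\})$); $u^\infty$ is the Steiner symmetrization of $u$ in $x_1$. *)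

theory Defs
  imports "HOL-Analysis.Analysis"
begin

definition fm :: "real set \<Rightarrow> bool" where
  "fm M \<longleftrightarrow> M \<in> sets lebesgue \<and> emeasure lebesgue M < \<infinity>"

definition ae_eq :: "'b::euclidean_space set \<Rightarrow> 'b set \<Rightarrow> bool" where
  "ae_eq A B \<longleftrightarrow> (A - B) \<union> (B - A) \<in> null_sets lebesgue"

definition escale :: "ereal \<Rightarrow> real" where
  "escale t = (if t = \<infinity> then 0 else exp (- real_of_ereal t))"

text \<open>E is a continuous Steiner symmetrization family E_t, 0 <= t <= infinity, on the
  measurable sets of finite measure (properties (i)-(iv), understood up to null sets).\<close>
definition CStS :: "(ereal \<Rightarrow> real set \<Rightarrow> real set) \<Rightarrow> bool" where
  "CStS E \<longleftrightarrow>
     (\<forall>t M. 0 \<le> t \<and> fm M \<longrightarrow> fm (E t M) \<and> emeasure lebesgue (E t M) = emeasure lebesgue M)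
   \<and> (\<forall>t M N. 0 \<le> t \<and> fm M \<and> fm N \<and> M \<subseteq> N \<longrightarrow> E t M - E t N \<in> null_sets lebesgue)
   \<and> (\<forall>s t M. 0 \<le> s \<and> 0 \<le> t \<and> fm M \<longrightarrow> ae_eq (E t (E s M)) (E (s + t) M))
   \<and> (\<forall>t x R. 0 \<le> t \<and> 0 < R \<longrightarrow>
        ae_eq (E t {x - R .. x + R}) {x * escale t - R .. x * escale t + R})"

text \<open>Open precise representative of a set (depends only on its a.e. class).\<close>
definition orep :: "'b::euclidean_space set \<Rightarrow> 'b set" where
  "orep A = {x. \<exists>e>0. ball x e - A \<in> null_sets lebesgue}"

text \<open>Points of R^N are written (x1, x') with x' in R^(N-1) (any euclidean space);
  E_t acts on the x1-slices.\<close>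
definition EN :: "(ereal \<Rightarrow> real set \<Rightarrow> real set) \<Rightarrow> ereal \<Rightarrow> (real \<times> 'a::euclidean_space) set
                   \<Rightarrow> (real \<times> 'a) set" where
  "EN E t M = {(x1, x'). x1 \<in> orep (E t {y. (y, x') \<in> M})}"

definition cstsym :: "(ereal \<Rightarrow> real set \<Rightarrow> real set) \<Rightarrow> ereal \<Rightarrow> (real \<times> 'a::euclidean_space \<Rightarrow> real)
                        \<Rightarrow> real \<times> 'a \<Rightarrow> real" where
  "cstsym E t u x =
     (if \<exists>c>0. x \<in> orep (EN E t {y. u y > c})
      then Sup {c. c > 0 \<and> x \<in> orep (EN E t {y. u y > c})} else 0)"

fun Ck :: "nat \<Rightarrow> ('b::euclidean_space \<Rightarrow> real) \<Rightarrow> bool" where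
  "Ck 0 \<phi> = continuous_on UNIV \<phi>"
| "Ck (Suc k) \<phi> = ((\<forall>x. \<phi> differentiable (at x)) \<and> continuous_on UNIV \<phi> \<and>
      (\<forall>i\<in>Basis. Ck k (\<lambda>x. frechet_derivative \<phi> (at x) i)))"

definition test_fun :: "'b::euclidean_space set \<Rightarrow> ('b \<Rightarrow> real) \<Rightarrow> bool" where
  "test_fun \<Omega> \<phi> \<longleftrightarrow> (\<forall>k. Ck k \<phi>) \<and> compact (closure {x. \<phi> x \<noteq> 0})
                     \<and> closure {x. \<phi> x \<noteq> 0} \<subseteq> \<Omega>"

definition grad :: "('b::euclidean_space \<Rightarrow> real) \<Rightarrow> 'b \<Rightarrow> 'b" where
  "grad \<phi> x = (\<Sum>i\<in>Basis. frechet_derivative \<phi> (at x) i *\<^sub>R i)"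

definition weak_grad :: "'b::euclidean_space set \<Rightarrow> ('b \<Rightarrow> real) \<Rightarrow> ('b \<Rightarrow> 'b) \<Rightarrow> bool" where
  "weak_grad \<Omega> v Dv \<longleftrightarrow>
     (\<forall>K. compact K \<and> K \<subseteq> \<Omega> \<longrightarrow> set_integrable lebesgue K v \<and> set_integrable lebesgue K Dv) \<and>
     (\<forall>\<phi>. test_fun \<Omega> \<phi> \<longrightarrow> (\<forall>i\<in>Basis.
        (LINT x:\<Omega>|lebesgue. v x * (frechet_derivative \<phi> (at x) i))
        = - (LINT x:\<Omega>|lebesgue. (Dv x \<bullet> i) * \<phi> x)))"

definition W1inf :: "'b::euclidean_space set \<Rightarrow> ('b \<Rightarrow> real) \<Rightarrow> ('b \<Rightarrow> 'b) \<Rightarrow> bool" where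
  "W1inf \<Omega> v Dv \<longleftrightarrow> set_borel_measurable lebesgue \<Omega> v \<and> set_borel_measurable lebesgue \<Omega> Dv \<and>
     (\<exists>C. AE x in lebesgue. x \<in> \<Omega> \<longrightarrow> \<bar>v x\<bar> \<le> C \<and> norm (Dv x) \<le> C) \<and> weak_grad \<Omega> v Dv"

definition W01_1 :: "'b::euclidean_space set \<Rightarrow> ('b \<Rightarrow> real) \<Rightarrow> ('b \<Rightarrow> 'b) \<Rightarrow> bool" where
  "W01_1 \<Omega> v Dv \<longleftrightarrow> set_integrable lebesgue \<Omega> v \<and> set_integrable lebesgue \<Omega> Dv \<and>
     weak_grad \<Omega> v Dv \<and>
     (\<exists>\<phi>s. (\<forall>n. test_fun \<Omega> (\<phi>s n)) \<and>
        (\<lambda>n. (LINT x:\<Omega>|lebesgue. \<bar>\<phi>s n x - v x\<bar> + norm (grad (\<phi>s n) x - Dv x)))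
          \<longlonglongrightarrow> 0)"

definition Gfield :: "(real \<Rightarrow> real) \<Rightarrow> 'b::euclidean_space \<Rightarrow> 'b" where
  "Gfield g y = (if y = 0 then 0 else (g (norm y) / norm y) *\<^sub>R y)"

end

theory Submission
  imports Defs
begin

lemma diff_null:
  fixes X Y :: "real set"
  assumes "X \<in> sets lebesgue" "Y \<in> sets lebesgue" "emeasure lebesgue X < \<infinity>"
    "Y - X \<in> null_sets lebesgue" "emeasure lebesgue X \<le> emeasure lebesgue Y"
  shows "X - Y \<in> null_sets lebesgue"
proof -
  have "emeasure lebesgue Y = emeasure lebesgue (Y \<inter> X) + emeasure lebesgue (Y - X)"
    using assms by (metis Diff_Diff_Int Int_commute emeasure_Diff_null_set sets.Diff add_0_right null_setsD1 sets.Int)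
  also have "\<dots> = emeasure lebesgue (X \<inter> Y)" using null_setsD1[OF assms(4)] by (simp add: Int_commute)
  finally have 1: "emeasure lebesgue Y = emeasure lebesgue (X \<inter> Y)" .
  have 2: "emeasure lebesgue X = emeasure lebesgue (X \<inter> Y) + emeasure lebesgue (X - Y)"
    using assms by (metis Diff_Diff_Int Diff_disjoint Int_Diff_Un plus_emeasure sets.Diff sets.Int Int_commute Un_commute Diff_Int_distrib)
  have fin: "emeasure lebesgue (X \<inter> Y) < \<infinity>"
    using assms(1,3) by (meson emeasure_mono inf_le1 order.strict_trans1)
  have "emeasure lebesgue (X - Y) = 0"
    using 1 2 assms(5) fin by (metis add.right_neutral add_left_mono antisym ennreal_add_left_cancel_le less_imp_neq zero_le)
  then show ?thesis using assms by (simp add: null_setsI sets.Diff)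
qed

lemma nsub: "B \<subseteq> A \<Longrightarrow> A \<in> null_sets lebesgue \<Longrightarrow> B \<in> null_sets lebesgue"
  by (rule null_sets_completion_subset)

definition img :: "real \<Rightarrow> real \<Rightarrow> real \<Rightarrow> real set" where
  "img e p q = {(p+q)/2*e - (q-p)/2 .. (p+q)/2*e + (q-p)/2}"

lemma emeasure_leb_Icc: "emeasure lebesgue {l..u::real} = ennreal (if l \<le> u then u - l else 0)"
  by (simp add: emeasure_completion)

lemma img_measure: "emeasure lebesgue (img e p q) = emeasure lebesgue {p..q}"
  unfolding img_def emeasure_leb_Icc by (auto simp: field_simps)

lemma fm_Icc: "fm {p..q::real}"
  unfolding fm_def emeasure_leb_Icc by auto

lemma E_Icc:
  assumes E: "CStS E" and t: "0 \<le> t"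
  shows "E t {p..q} - img (escale t) p q \<in> null_sets lebesgue \<and>
         img (escale t) p q - E t {p..q} \<in> null_sets lebesgue"
proof (cases "p < q")
  case True
  have "ae_eq (E t {(p+q)/2 - (q-p)/2 .. (p+q)/2 + (q-p)/2})
     {(p+q)/2 * escale t - (q-p)/2 .. (p+q)/2 * escale t + (q-p)/2}"
  proof -
    have "\<forall>t x R. 0 \<le> t \<and> 0 < R \<longrightarrow>
        ae_eq (E t {x - R .. x + R}) {x * escale t - R .. x * escale t + R}"
      using E unfolding CStS_def by blast
    moreover have "0 < (q-p)/2" using True by simp
    ultimately show ?thesis using t by blast
  qed
  moreover have "{(p+q)/2 - (q-p)/2 .. (p+q)/2 + (q-p)/2} = {p..q}" by (auto simp: field_simps)
  ultimately have "(E t {p..q} - img (escale t) p q) \<union> (img (escale t) p q - E t {p..q}) \<in> null_sets lebesgue"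
    unfolding ae_eq_def img_def by simp
  then show ?thesis using nsub by (meson sup.cobounded1 sup.cobounded2)
next
  case False
  have fmE: "fm (E t {p..q}) \<and> emeasure lebesgue (E t {p..q}) = emeasure lebesgue {p..q}"
    using E t fm_Icc unfolding CStS_def by blast
  have z: "emeasure lebesgue {p..q} = 0" using False unfolding emeasure_leb_Icc by auto
  have n1: "E t {p..q} \<in> null_sets lebesgue" using fmE z unfolding fm_def by (simp add: null_setsI)
  have n2: "img (escale t) p q \<in> null_sets lebesgue"
    using False img_measure[of "escale t" p q] z unfolding img_def
    by (simp add: null_setsI)
  show ?thesis using n1 n2 nsub by (meson Diff_subset)
qed

lemma fm_sets: "fm M \<Longrightarrow> M \<in> sets lebesgue" unfolding fm_def by simp

lemma CStS_fm: "CStS E \<Longrightarrow> 0 \<le> t \<Longrightarrow> fm M \<Longrightarrow> fm (E t M) \<and> emeasure lebesgue (E t M) = emeasure lebesgue M"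
  unfolding CStS_def by blast

lemma CStS_mono: "CStS E \<Longrightarrow> 0 \<le> t \<Longrightarrow> fm M \<Longrightarrow> fm N \<Longrightarrow> M \<subseteq> N \<Longrightarrow> E t M - E t N \<in> null_sets lebesgue"
  unfolding CStS_def by blast

lemma two_pieces:
  assumes E: "CStS E" and t: "0 \<le> t" and M: "fm M" and sub: "M \<subseteq> {p..a} \<union> {b..q}"
    and ab: "a < b" and disj: "img (escale t) p a \<inter> img (escale t) b q = {}"
  shows "E t M - (img (escale t) p a \<union> img (escale t) b q) \<in> null_sets lebesgue"
proof -
  define K where "K = {p..a} \<union> {b..q}"
  define Y where "Y = img (escale t) p a \<union> img (escale t) b q"
  have fmK: "fm K" unfolding K_def fm_def
    using fm_Icc[of p a] fm_Icc[of b q] unfolding fm_def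
    by (metis emeasure_subadditive ennreal_add_eq_top infinity_ennreal_def order_le_less_trans sets.Un top.not_eq_extremum)
  have EK: "fm (E t K) \<and> emeasure lebesgue (E t K) = emeasure lebesgue K" using CStS_fm[OF E t fmK] .
  have n1: "E t M - E t K \<in> null_sets lebesgue" using CStS_mono[OF E t M fmK] sub K_def by blast
  have n2: "E t {p..a} - E t K \<in> null_sets lebesgue" using CStS_mono[OF E t fm_Icc fmK] K_def by blast
  have n3: "E t {b..q} - E t K \<in> null_sets lebesgue" using CStS_mono[OF E t fm_Icc fmK] K_def by blast
  have n4: "img (escale t) p a - E t {p..a} \<in> null_sets lebesgue" using E_Icc[OF E t] by blast
  have n5: "img (escale t) b q - E t {b..q} \<in> null_sets lebesgue" using E_Icc[OF E t] by blast
  have "Y - E t K \<subseteq> (img (escale t) p a - E t {p..a}) \<union> (E t {p..a} - E t K) \<union>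
      (img (escale t) b q - E t {b..q}) \<union> (E t {b..q} - E t K)" unfolding Y_def by blast
  then have nY: "Y - E t K \<in> null_sets lebesgue" using n2 n3 n4 n5 nsub by (meson null_sets.Un)
  have YS: "Y \<in> sets lebesgue" unfolding Y_def img_def by simp
  have "emeasure lebesgue K = emeasure lebesgue {p..a} + emeasure lebesgue {b..q}"
    unfolding K_def using ab by (intro plus_emeasure[symmetric]) auto
  also have "\<dots> = emeasure lebesgue (img (escale t) p a) + emeasure lebesgue (img (escale t) b q)"
    by (simp add: img_measure)
  also have "\<dots> = emeasure lebesgue Y" unfolding Y_def using disj
    by (intro plus_emeasure) (auto simp: img_def)
  finally have meq: "emeasure lebesgue K = emeasure lebesgue Y" .
  have EK1: "E t K \<in> sets lebesgue" "emeasure lebesgue (E t K) < \<infinity>" using EK unfolding fm_def by auto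
  have EK2: "emeasure lebesgue (E t K) \<le> emeasure lebesgue Y" using EK meq by (metis order_refl)
  have "E t K - Y \<in> null_sets lebesgue"
    by (rule diff_null[OF EK1(1) YS EK1(2) nY EK2])
  then have "(E t M - E t K) \<union> (E t K - Y) \<in> null_sets lebesgue" using n1 by (rule null_sets.Un[rotated])
  moreover have "E t M - Y \<subseteq> (E t M - E t K) \<union> (E t K - Y)" by blast
  ultimately show ?thesis unfolding Y_def[symmetric] using nsub by blast
qed

lemma escale_ereal: "escale (ereal t) = exp (- t)" unfolding escale_def by simp

lemma open_not_null: "open (S::'b::euclidean_space set) \<Longrightarrow> S \<noteq> {} \<Longrightarrow> S \<notin> null_sets lebesgue"
  using open_not_negligible negligible_iff_null_sets by blast

lemma slice_gap:
  fixes t R \<rho> \<eta> x1 :: real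
  assumes E: "CStS E" and t: "0 \<le> t" and R: "0 < R" and M: "fm M"
    and sub: "\<forall>y\<in>M. -R \<le> y \<and> y \<le> R \<and> (y \<le> x1 - \<rho> \<or> x1 + \<rho> \<le> y)"
    and eta: "0 < \<eta>" and rho: "R * t + \<eta> < \<rho>"
    and y: "\<bar>y - x1\<bar> < \<eta>"
  shows "y \<notin> orep (E (ereal t) M)"
proof
  assume yo: "y \<in> orep (E (ereal t) M)"
  define e where "e = exp (- t)"
  define a where "a = x1 - \<rho>"
  define b where "b = x1 + \<rho>"
  have e0: "0 < e" "e \<le> 1" using t unfolding e_def by auto
  have e1: "1 - e \<le> t" unfolding e_def using exp_ge_add_one_self[of "-t"] by simp
  have tE: "0 \<le> ereal t" using t by simp
  have G1: "z < x1 - \<eta>" if "z \<in> img e (-R) a" for z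
  proof -
    have z1: "z \<le> (a-R)/2*e + (a+R)/2" and z0: "(a-R)/2*e - (a+R)/2 \<le> z" using that unfolding img_def by auto
    have aR: "-R \<le> a" using order_trans[OF z0 z1] by (simp add: field_simps)
    have "(R - a) * (1 - e) \<le> 2 * R * t"
    proof (cases "R - a \<le> 0")
      case True then show ?thesis using e0 t R by (smt (verit) mult_nonpos_nonneg mult_nonneg_nonneg)
    next
      case False
      have "(R - a) * (1 - e) \<le> (2*R) * t" using aR e0 e1 False by (intro mult_mono) auto
      then show ?thesis by simp
    qed
    moreover have "(a-R)/2*e + (a+R)/2 = a + (R - a) * (1 - e) / 2" by (simp add: field_simps)
    ultimately show ?thesis using z1 rho unfolding a_def by linarith
  qed
  have G2: "x1 + \<eta> < z" if "z \<in> img e b R" for z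
  proof -
    have z1: "z \<le> (b+R)/2*e + (R-b)/2" and z0: "(b+R)/2*e - (R-b)/2 \<le> z" using that unfolding img_def by auto
    have bR: "b \<le> R" using order_trans[OF z0 z1] by (simp add: field_simps)
    have "(b + R) * (1 - e) \<le> 2 * R * t"
    proof (cases "b + R \<le> 0")
      case True then show ?thesis using e0 t R by (smt (verit) mult_nonpos_nonneg mult_nonneg_nonneg)
    next
      case False
      have "(b + R) * (1 - e) \<le> (2*R) * t" using bR e0 e1 False by (intro mult_mono) auto
      then show ?thesis by simp
    qed
    moreover have "(b+R)/2*e - (R-b)/2 = b - (b + R) * (1 - e) / 2" by (simp add: field_simps)
    ultimately show ?thesis using z0 rho unfolding b_def by linarith
  qed
  have disj: "img e (-R) a \<inter> img e b R = {}" using G1 G2 eta by fastforce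
  have rpos: "0 < \<rho>" using rho R t eta by (smt (verit) mult_nonneg_nonneg)
  have subM: "M \<subseteq> {-R..a} \<union> {b..R}" using sub unfolding a_def b_def by auto
  have N: "E (ereal t) M - (img e (-R) a \<union> img e b R) \<in> null_sets lebesgue"
    using two_pieces[OF E tE M subM _ ] disj rpos unfolding escale_ereal e_def a_def b_def by simp
  obtain r where r: "r > 0" "ball y r - E (ereal t) M \<in> null_sets lebesgue"
    using yo unfolding orep_def by auto
  define S where "S = ball y r \<inter> ball x1 \<eta>"
  have "S \<subseteq> (ball y r - E (ereal t) M) \<union> (E (ereal t) M - (img e (-R) a \<union> img e b R))"
  proof
    fix z assume "z \<in> S"
    then have "\<bar>z - x1\<bar> < \<eta>" "z \<in> ball y r" unfolding S_def by (auto simp: dist_real_def)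
    then have "z \<notin> img e (-R) a \<union> img e b R" using G1 G2 by force
    then show "z \<in> (ball y r - E (ereal t) M) \<union> (E (ereal t) M - (img e (-R) a \<union> img e b R))"
      using \<open>z \<in> ball y r\<close> by blast
  qed
  then have "S \<in> null_sets lebesgue" using N r(2) nsub by (meson null_sets.Un)
  moreover have "y \<in> S" unfolding S_def using r y by (auto simp: dist_real_def)
  ultimately show False using open_not_null[of S] unfolding S_def by blast
qed


theorem lemma3:
  fixes f :: "real \<Rightarrow> real \<Rightarrow> real"
    and g :: "real \<Rightarrow> real"
    and lam :: "real \<Rightarrow> real"
    and \<Omega> :: "(real \<times> 'a::euclidean_space) set"
    and u :: "real \<times> 'a \<Rightarrow> real"
    and Du :: "real \<times> 'a \<Rightarrow> real \<times> 'a"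
    and L R t :: real
    and E :: "ereal \<Rightarrow> real set \<Rightarrow> real set"
    and x :: "real \<times> 'a"
  assumes f_meas: "(\<lambda>(r, v). f r v) \<in> borel_measurable (restrict_space borel ({0..} \<times> {0..}))"
    and f_bdd: "\<exists>M. \<forall>r\<ge>0. \<forall>v\<ge>0. \<bar>f r v\<bar> \<le> M"
    and f_cont: "\<forall>v\<ge>0. \<forall>\<epsilon>>0. \<exists>\<delta>>0. \<forall>r\<ge>0. \<forall>w\<ge>0. \<bar>w - v\<bar> < \<delta> \<longrightarrow> \<bar>f r w - f r v\<bar> < \<epsilon>"
    and f_mono: "\<forall>v\<ge>0. \<forall>r s. 0 \<le> r \<and> r \<le> s \<longrightarrow> f s v \<le> f r v"
    and g_cont: "continuous_on {0..} g"
    and g_C1: "\<forall>r>0. g differentiable (at r)" "continuous_on {0<..} (deriv g)"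
    and g0: "g 0 = 0"
    and g_pos: "\<forall>r>0. deriv g r > 0"
    and lam_cont: "continuous_on {0..} lam"
    and lam_pos: "\<forall>r\<ge>0. lam r > 0"
    and lam_mono: "mono_on {0..} lam"
    and dom: "open \<Omega>" "connected \<Omega>" "\<Omega> \<noteq> {}" "bounded \<Omega>"
    and u_C1: "\<forall>y\<in>\<Omega>. (u has_derivative (\<lambda>h. Du y \<bullet> h)) (at y)" "continuous_on \<Omega> Du"
    and u_cont: "continuous_on (closure \<Omega>) u"
    and u_pos: "\<forall>y\<in>\<Omega>. u y > 0"
    and u_bdry: "\<forall>y\<in>frontier \<Omega>. u y = 0"
    and u_ext: "\<forall>y. y \<notin> \<Omega> \<longrightarrow> u y = 0"
    and weak_sol: "\<forall>v Dv. W01_1 \<Omega> v Dv \<and> W1inf \<Omega> v Dv \<longrightarrow>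
        (LINT y:\<Omega>|lebesgue. Gfield g (Du y) \<bullet> Dv y) = (LINT y:\<Omega>|lebesgue. f (norm y) (u y) * v y)"
    and grad_bdry: "\<forall>\<epsilon>>0. \<exists>U. open U \<and> frontier \<Omega> \<subseteq> U \<and>
        (\<forall>y\<in>U \<inter> \<Omega>. \<bar>norm (Du y) - lam (norm y)\<bar> < \<epsilon>)"
    and L_lip: "L-lipschitz_on UNIV u"
    and L_least: "\<forall>L'. L'-lipschitz_on UNIV u \<longrightarrow> L \<le> L'"
    and R_pos: "R > 0"
    and R_ball: "closure \<Omega> \<subseteq> ball 0 R"
    and E_csts: "CStS E"
    and t_nonneg: "0 \<le> t"
    and big: "cstsym E (ereal t) u x > (2 * R * L) * t"
  shows "x \<in> \<Omega>"
proof (rule ccontr)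
  assume xO: "x \<notin> \<Omega>"
  obtain x1 x' where xx: "x = (x1, x')" by (cases x)
  have ux: "u x = 0" using u_ext xO by blast
  have L0: "0 \<le> L" using L_lip by (rule lipschitz_on_nonneg)
  have lip: "\<And>y z. \<bar>u y - u z\<bar> \<le> L * dist y z"
    using lipschitz_onD[OF L_lip] by (simp add: dist_real_def)
  obtain y0 where y0: "y0 \<in> \<Omega>" using dom(3) by blast
  have "u y0 > 0" using u_pos y0 by blast
  then have "0 < \<bar>u y0 - u x\<bar>" using ux by simp
  then have Lpos: "0 < L" using lip[of y0 x] L0 by (smt (verit) mult_eq_0_iff)
  have tE: "0 \<le> ereal t" using t_nonneg by simp
  have ucont: "continuous_on UNIV u" using L_lip by (rule lipschitz_on_continuous_on)
  have key: "x \<notin> orep (EN E (ereal t) {y. u y > c})" if c: "c > (2 * R * L) * t" for c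
  proof
    assume xin: "x \<in> orep (EN E (ereal t) {y. u y > c})"
    define \<rho>0 where "\<rho>0 = c / L"
    have r0: "2 * R * t < \<rho>0" unfolding \<rho>0_def using c Lpos by (simp add: field_simps)
    define \<eta> where "\<eta> = (\<rho>0 - 2 * R * t) / 3"
    define \<rho> where "\<rho> = \<rho>0 - \<eta>"
    have eta: "0 < \<eta>" unfolding \<eta>_def using r0 by simp
    have Rt: "0 \<le> R * t" using R_pos t_nonneg by simp
    have rho: "R * t + \<eta> < \<rho>" unfolding \<rho>_def \<eta>_def using r0 Rt by (simp add: field_simps)
    have notin: "(y1, y') \<notin> EN E (ereal t) {y. u y > c}" if y1: "\<bar>y1 - x1\<bar> < \<eta>" and y': "dist y' x' < \<eta>" for y1 y'
    proof -
      define M where "M = {s. u (s, y') > c}"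
      have uc: "continuous_on UNIV (\<lambda>s. u (s, y'))"
        by (rule continuous_on_compose2[OF ucont]) (auto intro!: continuous_intros)
      have Mopen: "open M" unfolding M_def
        by (rule open_Collect_less[OF continuous_on_const uc])
      have kt0: "0 \<le> 2 * R * L * t" using R_pos L0 t_nonneg by simp
      have cpos: "0 < c" using c kt0 by linarith
      have sub: "\<forall>s\<in>M. -R \<le> s \<and> s \<le> R \<and> (s \<le> x1 - \<rho> \<or> x1 + \<rho> \<le> s)"
      proof
        fix s assume "s \<in> M"
        then have us: "u (s, y') > c" unfolding M_def by simp
        have sO: "(s, y') \<in> \<Omega>"
        proof (rule ccontr)
          assume "(s, y') \<notin> \<Omega>"
          then have "u (s, y') = 0" using u_ext by blast
          then show False using us cpos by simp
        qed
        have "(s, y') \<in> ball 0 R" using R_ball closure_subset sO by blast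
        then have "norm (s, y') < R" by simp
        then have sR: "\<bar>s\<bar> < R" using norm_fst_le[of s y'] by simp
        have dd: "dist (s, y') (x1, x') \<le> \<bar>s - x1\<bar> + dist y' x'"
          unfolding dist_Pair_Pair using sqrt_sum_squares_le_sum_abs[of "dist s x1" "dist y' x'"]
          by (simp add: dist_real_def)
        have "c < \<bar>u (s, y') - u x\<bar>" using us ux by simp
        also have "\<dots> \<le> L * dist (s, y') x" by (rule lip)
        also have "\<dots> \<le> L * (\<bar>s - x1\<bar> + dist y' x')" unfolding xx using dd L0 by (rule mult_left_mono)
        also have "\<dots> < L * (\<bar>s - x1\<bar> + \<eta>)" using y' Lpos by simp
        finally have "c / L < \<bar>s - x1\<bar> + \<eta>" using Lpos by (simp add: field_simps)
        then have "\<rho> < \<bar>s - x1\<bar>" unfolding \<rho>_def \<rho>0_def by simp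
        then show "-R \<le> s \<and> s \<le> R \<and> (s \<le> x1 - \<rho> \<or> x1 + \<rho> \<le> s)" using sR by auto
      qed
      have "M \<subseteq> {-R..R}" using sub by auto
      then have "emeasure lebesgue M \<le> emeasure lebesgue {-R..R}"
        by (intro emeasure_mono) auto
      also have "\<dots> < \<infinity>" unfolding emeasure_leb_Icc by simp
      finally have fmM: "fm M" unfolding fm_def using Mopen by (simp add: borel_open)
      have "y1 \<notin> orep (E (ereal t) M)"
        by (rule slice_gap[OF E_csts t_nonneg R_pos fmM sub eta rho y1])
      then show ?thesis unfolding EN_def M_def by simp
    qed
    obtain r where r: "r > 0" "ball x r - EN E (ereal t) {y. u y > c} \<in> null_sets lebesgue"
      using xin unfolding orep_def by auto
    have "ball x (min r \<eta>) \<subseteq> ball x r - EN E (ereal t) {y. u y > c}"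
    proof
      fix z assume z: "z \<in> ball x (min r \<eta>)"
      obtain z1 z' where zz: "z = (z1, z')" by (cases z)
      have "dist z1 x1 < \<eta>" using z dist_fst_le[of z x] xx zz by (simp add: dist_commute)
      moreover have "dist z' x' < \<eta>" using z dist_snd_le[of z x] xx zz by (simp add: dist_commute)
      ultimately have "z \<notin> EN E (ereal t) {y. u y > c}" using notin zz by (simp add: dist_real_def)
      then show "z \<in> ball x r - EN E (ereal t) {y. u y > c}" using z by auto
    qed
    then have "ball x (min r \<eta>) \<in> null_sets lebesgue" using r(2) nsub by blast
    then show False using open_not_null[of "ball x (min r \<eta>)"] r(1) eta by simp
  qed
  have "cstsym E (ereal t) u x \<le> (2 * R * L) * t"
  proof (cases "\<exists>c>0. x \<in> orep (EN E (ereal t) {y. u y > c})")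
    case True
    then have "cstsym E (ereal t) u x = Sup {c. c > 0 \<and> x \<in> orep (EN E (ereal t) {y. u y > c})}"
      unfolding cstsym_def by simp
    also have "\<dots> \<le> (2 * R * L) * t"
      using True key by (intro cSup_least) (auto simp: not_less[symmetric])
    finally show ?thesis .
  next
    case False
    have "cstsym E (ereal t) u x = 0" unfolding cstsym_def using False by (rule if_not_P)
    then show ?thesis using R_pos L0 t_nonneg by simp
  qed
  then show False using big by simp
qed

end
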